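(* Let $(V,e)$ be a unital $\ast$-normed space and $S_2=V_{he}^\ast\cap2\operatorname{ball}V^\ast$. Then $\operatorname{ball}V$ is equivalent to $S_2^\circ$, i.e. $rS_2^\circ\subseteq\operatorname{ball}V\subseteq RS_2^\circ$ for some $r,R>0$.
   Context: A $\ast$-normed space is a complex vector space with involution and norm satisfying $\|v^\ast\|=\|v\|$; $V^\ast$ has involution $\langle v,\varphi^\ast\rangle=\overline{\langle v^\ast,\varphi\rangle}$, $V_h^\ast$ is the set of hermitian bounded functionals, and for nonzero hermitian $e$, $V_{he}^\ast=\{y\in V_h^\ast:\langle e,y\rangle=1\}$. $(V,e)$ is a unital $\ast$-normed space if $V_{he}^\ast\cap\operatorname{ball}V^\ast\ne\varnothing$. For $A\subseteq V^\ast$, $A^\circ=\{v\in V:|\langle v,a\rangle|\le1\ \forall a\in A\}$. *)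

theory Defs
  imports "HOL-Analysis.Analysis"
begin

text \<open>A complex normed space is modelled as a real normed vector space together with a
complex scalar multiplication sm extending the real one.\<close>

definition complex_normed_space :: "(complex \<Rightarrow> 'a::real_normed_vector \<Rightarrow> 'a) \<Rightarrow> bool" where
  "complex_normed_space sm \<longleftrightarrow>
     (\<forall>r v. sm (complex_of_real r) v = r *\<^sub>R v) \<and>
     (\<forall>c x y. sm c (x + y) = sm c x + sm c y) \<and>
     (\<forall>c d v. sm (c + d) v = sm c v + sm d v) \<and>
     (\<forall>c d v. sm c (sm d v) = sm (c * d) v) \<and>
     (\<forall>c v. norm (sm c v) = cmod c * norm v)"

definition star_normed_space ::
  "(complex \<Rightarrow> 'a::real_normed_vector \<Rightarrow> 'a) \<Rightarrow> ('a \<Rightarrow> 'a) \<Rightarrow> bool" where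
  "star_normed_space sm st \<longleftrightarrow>
     complex_normed_space sm \<and>
     (\<forall>x y. st (x + y) = st x + st y) \<and>
     (\<forall>c v. st (sm c v) = sm (cnj c) (st v)) \<and>
     (\<forall>v. st (st v) = v) \<and>
     (\<forall>v. norm (st v) = norm v)"

definition bounded_functional ::
  "(complex \<Rightarrow> 'a::real_normed_vector \<Rightarrow> 'a) \<Rightarrow> ('a \<Rightarrow> complex) \<Rightarrow> bool" where
  "bounded_functional sm f \<longleftrightarrow>
     (\<forall>x y. f (x + y) = f x + f y) \<and>
     (\<forall>c x. f (sm c x) = c * f x) \<and>
     (\<exists>K. \<forall>x. cmod (f x) \<le> K * norm x)"

definition dual_star :: "('a \<Rightarrow> 'a) \<Rightarrow> ('a \<Rightarrow> complex) \<Rightarrow> ('a \<Rightarrow> complex)" where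
  "dual_star st f = (\<lambda>v. cnj (f (st v)))"

definition herm_dual :: "(complex \<Rightarrow> 'a::real_normed_vector \<Rightarrow> 'a) \<Rightarrow> ('a \<Rightarrow> 'a) \<Rightarrow> ('a \<Rightarrow> complex) set" where
  "herm_dual sm st = {f. bounded_functional sm f \<and> dual_star st f = f}"

definition herm_dual_e ::
  "(complex \<Rightarrow> 'a::real_normed_vector \<Rightarrow> 'a) \<Rightarrow> ('a \<Rightarrow> 'a) \<Rightarrow> 'a \<Rightarrow> ('a \<Rightarrow> complex) set" where
  "herm_dual_e sm st e = {f \<in> herm_dual sm st. f e = 1}"

definition dual_ball ::
  "(complex \<Rightarrow> 'a::real_normed_vector \<Rightarrow> 'a) \<Rightarrow> real \<Rightarrow> ('a \<Rightarrow> complex) set" where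
  "dual_ball sm t = {f. bounded_functional sm f \<and> onorm f \<le> t}"

definition unital_star_normed_space ::
  "(complex \<Rightarrow> 'a::real_normed_vector \<Rightarrow> 'a) \<Rightarrow> ('a \<Rightarrow> 'a) \<Rightarrow> 'a \<Rightarrow> bool" where
  "unital_star_normed_space sm st e \<longleftrightarrow>
     star_normed_space sm st \<and> e \<noteq> 0 \<and> st e = e \<and>
     herm_dual_e sm st e \<inter> dual_ball sm 1 \<noteq> {}"

definition polar :: "('a \<Rightarrow> complex) set \<Rightarrow> 'a set" where
  "polar A = {v. \<forall>a\<in>A. cmod (a v) \<le> 1}"

end

theory Submission
  imports Defs
begin


lemma HB:
  fixes x0 :: "'a::real_normed_vector"
  shows "\<exists>u::'a\<Rightarrow>real. (\<forall>x y. u (x+y) = u x + u y) \<and> (\<forall>t x. u (t *\<^sub>R x) = t * u x)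
     \<and> (\<forall>x. u x \<le> norm x) \<and> u x0 = norm x0"
proof -
  define P where "P G \<longleftrightarrow> (x0, norm x0) \<in> G \<and>
     (\<forall>x a y b. (x,a)\<in>G \<longrightarrow> (y,b)\<in>G \<longrightarrow> (x+y,a+b)\<in>G) \<and>
     (\<forall>x a t. (x,a)\<in>G \<longrightarrow> (t *\<^sub>R x, t*a) \<in> G) \<and>
     (\<forall>x a. (x,a)\<in>G \<longrightarrow> a \<le> norm x)" for G :: "('a \<times> real) set"
  define G0 where "G0 = {(t *\<^sub>R x0, t * norm x0) | t. True}"
  have PG0: "P G0"
    unfolding P_def G0_def
  proof (intro conjI allI impI)
    show "(x0, norm x0) \<in> {(t *\<^sub>R x0, t * norm x0) |t. True}"
      by (rule CollectI, rule exI[of _ 1]) simp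
  next
    fix x a y b assume "(x,a) \<in> {(t *\<^sub>R x0, t * norm x0) |t. True}" "(y,b) \<in> {(t *\<^sub>R x0, t * norm x0) |t. True}"
    then obtain s t where "x = s *\<^sub>R x0" "a = s * norm x0" "y = t *\<^sub>R x0" "b = t * norm x0" by auto
    then show "(x+y,a+b) \<in> {(t *\<^sub>R x0, t * norm x0) |t. True}"
      by (intro CollectI exI[of _ "s+t"]) (simp add: scaleR_add_left distrib_right)
  next
    fix x a t assume "(x,a) \<in> {(t *\<^sub>R x0, t * norm x0) |t. True}"
    then obtain s where "x = s *\<^sub>R x0" "a = s * norm x0" by auto
    then show "(t *\<^sub>R x, t*a) \<in> {(t *\<^sub>R x0, t * norm x0) |t. True}"
      by force
  next
    fix x a assume "(x,a) \<in> {(t *\<^sub>R x0, t * norm x0) |t. True}"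
    then obtain s where "x = s *\<^sub>R x0" "a = s * norm x0" by auto
    then show "a \<le> norm x" by (simp add: mult_right_mono)
  qed
  have "\<exists>M\<in>Collect P. \<forall>X\<in>Collect P. M \<subseteq> X \<longrightarrow> X = M"
  proof (rule Zorn_Lemma2, rule ballI)
    fix C assume C: "C \<in> chains (Collect P)"
    show "\<exists>U\<in>Collect P. \<forall>X\<in>C. X \<subseteq> U"
    proof (cases "C = {}")
      case True then show ?thesis using PG0 by auto
    next
      case False
      have CP: "\<And>X. X \<in> C \<Longrightarrow> P X" using chainsD2[OF C] by auto
      have ch: "\<And>X Y. X \<in> C \<Longrightarrow> Y \<in> C \<Longrightarrow> X \<subseteq> Y \<or> Y \<subseteq> X" using chainsD[OF C] by blast
      have "P (\<Union>C)"
        unfolding P_def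
      proof (intro conjI allI impI)
        obtain X where "X \<in> C" using False by auto
        then show "(x0, norm x0) \<in> \<Union>C" using CP unfolding P_def by auto
      next
        fix x a y b assume "(x,a) \<in> \<Union>C" "(y,b) \<in> \<Union>C"
        then obtain X Y where X: "X \<in> C" "(x,a)\<in>X" and Y: "Y\<in>C" "(y,b)\<in>Y" by auto
        show "(x+y,a+b) \<in> \<Union>C"
        proof (cases "X \<subseteq> Y")
          case True
          then have "(x+y,a+b) \<in> Y" using CP[OF Y(1)] X Y unfolding P_def by blast
          then show ?thesis using Y by auto
        next
          case False
          then have "Y \<subseteq> X" using ch X Y by blast
          then have "(x+y,a+b) \<in> X" using CP[OF X(1)] X Y unfolding P_def by blast
          then show ?thesis using X by auto
        qed
      next
        fix x a t assume "(x,a) \<in> \<Union>C"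
        then obtain X where X: "X \<in> C" "(x,a)\<in>X" by auto
        then have "(t *\<^sub>R x, t*a) \<in> X" using CP[OF X(1)] unfolding P_def by blast
        then show "(t *\<^sub>R x, t*a) \<in> \<Union>C" using X by auto
      next
        fix x a assume "(x,a) \<in> \<Union>C"
        then obtain X where X: "X \<in> C" "(x,a)\<in>X" by auto
        then show "a \<le> norm x" using CP[OF X(1)] unfolding P_def by blast
      qed
      then show ?thesis by auto
    qed
  qed
  then obtain M where PM: "P M" and max: "\<And>X. P X \<Longrightarrow> M \<subseteq> X \<Longrightarrow> X = M" by auto
  have x0M: "(x0, norm x0) \<in> M" and addM: "\<And>x a y b. (x,a)\<in>M \<Longrightarrow> (y,b)\<in>M \<Longrightarrow> (x+y,a+b)\<in>M"
    and scM: "\<And>x a t. (x,a)\<in>M \<Longrightarrow> (t *\<^sub>R x, t*a) \<in> M"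
    and bdM: "\<And>x a. (x,a)\<in>M \<Longrightarrow> a \<le> norm x" using PM unfolding P_def by blast+
  have zero: "(0, 0) \<in> M" using scM[OF x0M, of 0] by simp
  have func: "a = b" if "(x,a)\<in>M" "(x,b)\<in>M" for x a b
  proof -
    have "(x + (-1) *\<^sub>R x, a + (-1) * b) \<in> M" using addM[OF that(1) scM[OF that(2)]] .
    then have 1: "a - b \<le> 0" using bdM by fastforce
    have "(x + (-1) *\<^sub>R x, b + (-1) * a) \<in> M" using addM[OF that(2) scM[OF that(1)]] .
    then have 2: "b - a \<le> 0" using bdM by fastforce
    from 1 2 show ?thesis by simp
  qed
  have total: "\<exists>c. (y,c) \<in> M" for y
  proof (rule ccontr)
    assume ny: "\<not> (\<exists>c. (y,c) \<in> M)"
    define L where "L = {a - norm (x - y) | x a. (x,a)\<in>M}"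
    define c where "c = Sup L"
    have le: "a - norm (x - y) \<le> norm (x'+y) - a'" if "(x,a)\<in>M" "(x',a')\<in>M" for x a x' a'
    proof -
      have "a + a' \<le> norm (x + x')" using bdM[OF addM[OF that]] .
      also have "\<dots> = norm ((x - y) + (x' + y))" by (simp add: algebra_simps)
      also have "\<dots> \<le> norm (x - y) + norm (x' + y)" by (rule norm_triangle_ineq)
      finally show ?thesis by simp
    qed
    have Lne: "L \<noteq> {}" using x0M unfolding L_def by blast
    have bdd: "bdd_above L" unfolding bdd_above_def L_def using le[OF _ x0M] by blast
    have c1: "a - norm (x - y) \<le> c" if "(x,a)\<in>M" for x a
      unfolding c_def by (rule cSup_upper[OF _ bdd]) (use that L_def in blast)
    have c2: "c \<le> norm (x+y) - a" if "(x,a)\<in>M" for x a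
      unfolding c_def by (rule cSup_least[OF Lne]) (use le that L_def in blast)
    define M' where "M' = {(x + t *\<^sub>R y, a + t*c) | x a t. (x,a)\<in>M}"
    have "P M'"
      unfolding P_def
    proof (intro conjI allI impI)
      show "(x0, norm x0) \<in> M'" unfolding M'_def using x0M by force
    next
      fix x a x' a' assume "(x,a)\<in>M'" "(x',a')\<in>M'"
      then obtain z b t z' b' t' where "x = z + t *\<^sub>R y" "a = b + t*c" "(z,b)\<in>M"
        "x' = z' + t' *\<^sub>R y" "a' = b' + t'*c" "(z',b')\<in>M" unfolding M'_def by blast
      then have "x+x' = (z+z') + (t+t') *\<^sub>R y" "a+a' = (b+b') + (t+t')*c" "(z+z',b+b')\<in>M"
        by (auto simp: addM algebra_simps)
      then show "(x+x',a+a')\<in>M'" unfolding M'_def by blast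
    next
      fix x a s assume "(x,a)\<in>M'"
      then obtain z b t where "x = z + t *\<^sub>R y" "a = b + t*c" "(z,b)\<in>M" unfolding M'_def by blast
      then have "s *\<^sub>R x = s *\<^sub>R z + (s*t) *\<^sub>R y" "s*a = s*b + (s*t)*c" "(s *\<^sub>R z, s*b)\<in>M"
        using scM[of z b s] by (auto simp: algebra_simps)
      then show "(s *\<^sub>R x, s*a)\<in>M'" unfolding M'_def by blast
    next
      fix x a assume "(x,a)\<in>M'"
      then obtain z b t where xe: "x = z + t *\<^sub>R y" and ae: "a = b + t*c" and zb: "(z,b)\<in>M" unfolding M'_def by blast
      show "a \<le> norm x"
      proof (cases t "0::real" rule: linorder_cases)
        case equal then show ?thesis using xe ae bdM[OF zb] by simp
      next
        case greater
        have "c \<le> norm ((1/t) *\<^sub>R z + y) - (1/t)*b" using c2[OF scM[OF zb]] .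
        then have "t * c \<le> t * norm ((1/t) *\<^sub>R z + y) - b" using greater
          by (simp add: field_simps)
        also have "t * norm ((1/t) *\<^sub>R z + y) = norm (t *\<^sub>R ((1/t) *\<^sub>R z + y))" using greater by simp
        also have "t *\<^sub>R ((1/t) *\<^sub>R z + y) = x" using greater xe by (simp add: scaleR_add_right)
        finally show ?thesis using ae by simp
      next
        case less
        define s where "s = - t"
        have s: "s > 0" using less s_def by simp
        have "(1/s)*b - norm ((1/s) *\<^sub>R z - y) \<le> c" using c1[OF scM[OF zb]] .
        then have "b - s * norm ((1/s) *\<^sub>R z - y) \<le> s * c" using s
          by (simp add: field_simps)
        also have "s * norm ((1/s) *\<^sub>R z - y) = norm (s *\<^sub>R ((1/s) *\<^sub>R z - y))" using s by simp
        also have "s *\<^sub>R ((1/s) *\<^sub>R z - y) = x" using s xe s_def by (simp add: scaleR_diff_right)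
        finally show ?thesis using ae s_def by simp
      qed
    qed
    moreover have "M \<subseteq> M'" unfolding M'_def by force
    ultimately have "M' = M" using max by blast
    moreover have "(y, c) \<in> M'" unfolding M'_def using zero by force
    ultimately show False using ny by blast
  qed
  define u where "u x = (THE a. (x,a)\<in>M)" for x
  have uM: "(x, u x) \<in> M" for x
    unfolding u_def by (rule theI') (use total func in blast)
  have uf: "u x = a" if "(x,a)\<in>M" for x a using func[OF uM that] .
  show ?thesis
    by (intro exI[of _ u] conjI allI)
      (auto intro: uf addM scM uM bdM x0M)
qed



context
  fixes sm :: "complex \<Rightarrow> 'a::real_normed_vector \<Rightarrow> 'a"
  assumes CN: "complex_normed_space sm"
begin

lemma sm_real: "sm (complex_of_real r) v = r *\<^sub>R v"
  and sm_addR: "sm c (x + y) = sm c x + sm c y"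
  and sm_addL: "sm (c + d) v = sm c v + sm d v"
  and sm_mult: "sm c (sm d v) = sm (c * d) v"
  and sm_norm: "norm (sm c v) = cmod c * norm v"
  using CN unfolding complex_normed_space_def by blast+

lemma sm_one: "sm 1 v = v" using sm_real[of 1] by simp

lemma sm_ii: "sm \<i> (sm \<i> v) = - v"
  using sm_mult[of \<i> \<i> v] sm_real[of "-1" v] by simp

lemma sm_i_scaleR: "sm \<i> (r *\<^sub>R x) = r *\<^sub>R sm \<i> x"
proof -
  have "sm \<i> (sm (complex_of_real r) x) = sm (complex_of_real r) (sm \<i> x)"
    by (simp add: sm_mult mult.commute)
  then show ?thesis by (simp add: sm_real)
qed

lemma sm_decomp: "sm c x = Re c *\<^sub>R x + Im c *\<^sub>R sm \<i> x"
proof -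
  have c: "c = complex_of_real (Re c) + \<i> * complex_of_real (Im c)"
    by (simp add: complex_eq_iff)
  have "sm c x = sm (complex_of_real (Re c)) x + sm (\<i> * complex_of_real (Im c)) x"
    by (subst c) (rule sm_addL)
  also have "sm (\<i> * complex_of_real (Im c)) x = sm \<i> (sm (complex_of_real (Im c)) x)"
    by (simp add: sm_mult)
  finally show ?thesis by (simp add: sm_real sm_i_scaleR)
qed

lemma sm_neg_i: "sm (- \<i>) x = - sm \<i> x"
  using sm_mult[of "complex_of_real (-1)" \<i> x] sm_real[of "-1"] by simp

lemma bf_bl: assumes "bounded_functional sm f" shows "bounded_linear f"
proof -
  from assms obtain K where add: "\<And>x y. f (x+y) = f x + f y" and hom: "\<And>c x. f (sm c x) = c * f x"
    and K: "\<And>x. cmod (f x) \<le> K * norm x" unfolding bounded_functional_def by blast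
  show ?thesis
  proof
    fix r x show "f (r *\<^sub>R x) = r *\<^sub>R f x" using hom[of "complex_of_real r" x]
      by (simp add: sm_real scaleR_conv_of_real)
  next
    show "\<exists>K. \<forall>x. norm (f x) \<le> norm x * K" using K by (metis mult.commute)
  qed (rule add)
qed

lemma dual_ball_bound: assumes "f \<in> dual_ball sm t" shows "cmod (f x) \<le> t * norm x"
proof -
  have "bounded_linear f" using assms bf_bl unfolding dual_ball_def by blast
  then have "cmod (f x) \<le> onorm f * norm x" by (rule onorm)
  also have "\<dots> \<le> t * norm x" using assms unfolding dual_ball_def by (simp add: mult_right_mono)
  finally show ?thesis .
qed

end

context
  fixes sm :: "complex \<Rightarrow> 'a::real_normed_vector \<Rightarrow> 'a" and st :: "'a \<Rightarrow> 'a"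
  assumes S: "star_normed_space sm st"
begin

lemma CN: "complex_normed_space sm" using S unfolding star_normed_space_def by blast

lemma st_add: "st (x + y) = st x + st y"
  and st_sm: "st (sm c v) = sm (cnj c) (st v)"
  and st_st: "st (st v) = v"
  and st_norm: "norm (st v) = norm v"
  using S unfolding star_normed_space_def by blast+

lemma st_scaleR: "st (r *\<^sub>R x) = r *\<^sub>R st x"
  using st_sm[of "complex_of_real r" x] by (simp add: sm_real[OF CN])

lemma st_neg: "st (- x) = - st x"
  using st_scaleR[of "-1" x] by simp

lemma st_i: "st (sm \<i> x) = - sm \<i> (st x)"
  using st_sm[of \<i> x] by (simp add: sm_neg_i[OF CN])

lemma complexify:
  fixes w :: "'a \<Rightarrow> real"
  assumes wadd: "\<And>x y. w (x+y) = w x + w y" and wsc: "\<And>t x. w (t *\<^sub>R x) = t * w x"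
  and wb: "\<And>x. \<bar>w x\<bar> \<le> norm x" and ws: "\<And>x. w (st x) = w x"
  defines "h \<equiv> \<lambda>x. complex_of_real (w x) - \<i> * complex_of_real (w (sm \<i> x))"
  shows "h \<in> herm_dual sm st" "\<And>x. cmod (h x) \<le> norm x" "\<And>x. Re (h x) = w x"
proof -
  note CN' = CN
  have wneg: "w (- x) = - w x" for x using wsc[of "-1" x] by simp
  have wdiff: "w (x - y) = w x - w y" for x y using wadd[of x "-y"] wneg[of y] by simp
  have hadd: "h (x+y) = h x + h y" for x y
    unfolding h_def by (simp add: sm_addR[OF CN] wadd algebra_simps)
  have hsm: "h (sm c x) = c * h x" for c x
  proof -
    have e1: "w (sm c x) = Re c * w x + Im c * w (sm \<i> x)"
      by (simp add: sm_decomp[OF CN, of c x] wadd wsc)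
    have e2: "w (sm \<i> (sm c x)) = Re c * w (sm \<i> x) - Im c * w x"
      by (simp add: sm_decomp[OF CN, of c x] sm_addR[OF CN] sm_i_scaleR[OF CN] sm_ii[OF CN] wadd wsc wneg wdiff)
    show ?thesis unfolding h_def e1 e2 by (simp add: complex_eq_iff algebra_simps)
  qed
  show hre: "Re (h x) = w x" for x unfolding h_def by simp
  show hb: "cmod (h x) \<le> norm x" for x
  proof (cases "h x = 0")
    case True then show ?thesis by simp
  next
    case False
    define c where "c = cnj (h x) / complex_of_real (cmod (h x))"
    have cm: "cmod c = 1" using False unfolding c_def by (simp add: norm_divide)
    have "c * h x = complex_of_real (cmod (h x))"
    proof -
      have "h x * cnj (h x) = complex_of_real (cmod (h x)) * complex_of_real (cmod (h x))"
        using complex_norm_square[of "h x"] by (simp add: power2_eq_square)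
      then show ?thesis using False unfolding c_def by (simp add: field_simps)
    qed
    then have "cmod (h x) = Re (h (sm c x))" by (simp add: hsm)
    also have "\<dots> = w (sm c x)" by (rule hre)
    also have "\<dots> \<le> norm (sm c x)" using wb[of "sm c x"] by simp
    also have "\<dots> = norm x" by (simp add: sm_norm[OF CN] cm)
    finally show ?thesis .
  qed
  have "bounded_functional sm h" unfolding bounded_functional_def
    using hadd hsm hb by (metis mult_1)
  moreover have "dual_star st h = h"
  proof
    fix x
    have "w (sm \<i> (st x)) = - w (sm \<i> x)"
    proof -
      have "sm \<i> (st x) = st (- sm \<i> x)"
        using st_i[of "st x"] by (metis st_st st_neg)
      then show ?thesis by (simp add: ws wneg)
    qed
    then show "dual_star st h x = h x" unfolding dual_star_def h_def
      by (simp add: ws complex_eq_iff)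
  qed
  ultimately show "h \<in> herm_dual sm st" unfolding herm_dual_def by blast
qed

end


lemma herm_real:
  assumes "h \<in> herm_dual sm st" "st e = e"
  shows "cnj (h e) = h e" "\<And>x. h (st x) = cnj (h x)"
proof -
  have d: "cnj (h (st x)) = h x" for x
    using assms(1) unfolding herm_dual_def dual_star_def by (metis (mono_tags, lifting) mem_Collect_eq)
  show "h (st x) = cnj (h x)" for x using d[of x] by (metis complex_cnj_cnj)
  show "cnj (h e) = h e" using d[of e] assms(2) by simp
qed

lemma key_h:
  fixes sm :: "complex \<Rightarrow> 'a::real_normed_vector \<Rightarrow> 'a"
  assumes S: "star_normed_space sm st" and ee: "st e = e"
    and p0: "p \<in> herm_dual_e sm st e \<inter> dual_ball sm 1"
    and h: "h \<in> herm_dual sm st" and hb: "\<And>x. cmod (h x) \<le> norm x"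
    and v: "v \<in> polar (herm_dual_e sm st e \<inter> dual_ball sm 2)"
  shows "cmod (h v) \<le> 1 + 2 * norm e"
proof -
  note CN = CN[OF S]
  define E where "E = norm e"
  define t where "t = 1 / (1 + E)"
  have E0: "E \<ge> 0" unfolding E_def by simp
  have t0: "t > 0" unfolding t_def using E0 by simp
  have pb: "cmod (p x) \<le> norm x" for x using dual_ball_bound[OF CN, of p 1 x] p0 by simp
  have pe: "p e = 1" using p0 unfolding herm_dual_e_def by blast
  have pbf: "bounded_functional sm p" using p0 unfolding herm_dual_e_def herm_dual_def by blast
  have hbf: "bounded_functional sm h" using h unfolding herm_dual_def by blast
  have padd: "p (x+y) = p x + p y" and psm: "p (sm c x) = c * p x" for x y c
    using pbf unfolding bounded_functional_def by blast+
  have hadd: "h (x+y) = h x + h y" and hsm: "h (sm c x) = c * h x" for x y c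
    using hbf unfolding bounded_functional_def by blast+
  have pst: "p (st x) = cnj (p x)" for x using herm_real[of p sm st e] p0 ee
    unfolding herm_dual_e_def by blast
  have hst: "h (st x) = cnj (h x)" for x using herm_real[OF h ee] by blast
  have hec: "cnj (h e) = h e" using herm_real[OF h ee] by blast
  have heb: "cmod (h e) \<le> E" using hb unfolding E_def .
  define g where "g x = h x - h e * p x" for x
  have gb: "cmod (g x) \<le> (1 + E) * norm x" for x
  proof -
    have "cmod (g x) \<le> cmod (h x) + cmod (h e) * cmod (p x)" unfolding g_def
      using norm_triangle_ineq4[of "h x" "h e * p x"] by (simp add: norm_mult)
    also have "\<dots> \<le> norm x + E * norm x" using hb[of x] heb pb[of x] E0
      by (intro add_mono mult_mono) auto
    finally show ?thesis by (simp add: algebra_simps)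
  qed
  define F where "F s x = p x + complex_of_real s * g x" for s x
  have FS: "F s \<in> herm_dual_e sm st e \<inter> dual_ball sm 2" if s: "\<bar>s\<bar> \<le> t" for s
  proof -
    have Fb: "cmod (F s x) \<le> 2 * norm x" for x
    proof -
      have "cmod (F s x) \<le> cmod (p x) + \<bar>s\<bar> * cmod (g x)" unfolding F_def
        using norm_triangle_ineq[of "p x" "complex_of_real s * g x"] by (simp add: norm_mult)
      also have "\<dots> \<le> norm x + t * ((1 + E) * norm x)"
        using pb[of x] gb[of x] s by (intro add_mono mult_mono) auto
      also have "\<dots> = 2 * norm x" unfolding t_def using E0 by (simp add: field_simps)
      finally show ?thesis .
    qed
    have bf: "bounded_functional sm (F s)" unfolding bounded_functional_def
    proof (intro conjI allI exI)
      show "F s (x + y) = F s x + F s y" for x y unfolding F_def g_def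
        by (simp add: padd hadd algebra_simps)
      show "F s (sm c x) = c * F s x" for c x unfolding F_def g_def
        by (simp add: psm hsm algebra_simps)
      show "cmod (F s x) \<le> 2 * norm x" for x by (rule Fb)
    qed
    have "dual_star st (F s) = F s"
      unfolding dual_star_def F_def g_def by (rule ext) (simp add: pst hst hec)
    moreover have "F s e = 1" unfolding F_def g_def by (simp add: pe)
    moreover have "onorm (F s) \<le> 2" by (rule onorm_bound) (use Fb in auto)
    ultimately show ?thesis using bf unfolding herm_dual_e_def herm_dual_def dual_ball_def by blast
  qed
  have vF: "cmod (F s v) \<le> 1" if "\<bar>s\<bar> \<le> t" for s
    using v FS[OF that] unfolding polar_def by blast
  have "F t v - F (-t) v = complex_of_real (2*t) * g v" unfolding F_def by (simp add: algebra_simps)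
  then have "2 * t * cmod (g v) = cmod (F t v - F (-t) v)" using t0 by (simp add: norm_mult)
  also have "\<dots> \<le> cmod (F t v) + cmod (F (-t) v)" by (rule norm_triangle_ineq4)
  also have "\<dots> \<le> 2" using vF[of t] vF[of "-t"] t0 by simp
  finally have "cmod (g v) \<le> 1 + E" using t0 unfolding t_def using E0 by (simp add: field_simps)
  have "p \<in> dual_ball sm 2" using p0 unfolding dual_ball_def by auto
  then have "p \<in> herm_dual_e sm st e \<inter> dual_ball sm 2" using p0 by blast
  then have pv: "cmod (p v) \<le> 1" using v unfolding polar_def by blast
  have "h v = g v + h e * p v" unfolding g_def by simp
  then have "cmod (h v) \<le> cmod (g v) + cmod (h e) * cmod (p v)"
    using norm_triangle_ineq[of "g v" "h e * p v"] by (simp add: norm_mult)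
  also have "\<dots> \<le> (1 + E) + E * 1" using \<open>cmod (g v) \<le> 1 + E\<close> heb pv E0
    by (intro add_mono mult_mono) auto
  finally show ?thesis unfolding E_def by simp
qed


theorem lemma4p2:
  fixes sm :: "complex \<Rightarrow> 'a::real_normed_vector \<Rightarrow> 'a"
    and st :: "'a \<Rightarrow> 'a" and e :: 'a
  assumes "unital_star_normed_space sm st e"
  shows "\<exists>r R. r > 0 \<and> R > 0 \<and>
    (\<lambda>v. r *\<^sub>R v) ` polar (herm_dual_e sm st e \<inter> dual_ball sm 2) \<subseteq> cball 0 1 \<and>
    cball 0 1 \<subseteq> (\<lambda>v. R *\<^sub>R v) ` polar (herm_dual_e sm st e \<inter> dual_ball sm 2)"
proof -
  have S: "star_normed_space sm st" and ee: "st e = e"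
    using assms unfolding unital_star_normed_space_def by blast+
  obtain p where p0: "p \<in> herm_dual_e sm st e \<inter> dual_ball sm 1"
    using assms unfolding unital_star_normed_space_def by blast
  note CN = CN[OF S]
  define K where "K = 2 * (1 + 2 * norm e)"
  have K0: "K > 0" unfolding K_def by (simp add: add_pos_nonneg)
  have bound: "norm v \<le> K" if v: "v \<in> polar (herm_dual_e sm st e \<inter> dual_ball sm 2)" for v
  proof -
    obtain u :: "'a \<Rightarrow> real" where uadd: "\<And>x y. u (x+y) = u x + u y" and usc: "\<And>t x. u (t *\<^sub>R x) = t * u x"
      and ub: "\<And>x. u x \<le> norm x" and uv: "u v = norm v" using HB[of v] by blast
    have uneg: "u (- x) = - u x" for x using usc[of "-1" x] by simp
    have uabs: "\<bar>u x\<bar> \<le> norm x" for x using ub[of x] ub[of "-x"] uneg[of x] by simp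
    define w1 where "w1 x = (u x + u (st x)) / 2" for x
    define w2 where "w2 x = (u (sm \<i> x) - u (st (sm \<i> x))) / 2" for x
    have i1: "sm \<i> (st x) = - st (sm \<i> x)" for x
      using st_i[OF S, of "st x"] by (metis st_st[OF S] st_neg[OF S])
    have i2: "st (sm \<i> (st x)) = - sm \<i> x" for x
      using st_i[OF S, of "st x"] by (simp add: st_st[OF S])
    obtain h1 where h1: "h1 \<in> herm_dual sm st" "\<And>x. cmod (h1 x) \<le> norm x" "\<And>x. Re (h1 x) = w1 x"
    proof -
      have "w1 (x+y) = w1 x + w1 y" for x y unfolding w1_def by (simp add: uadd st_add[OF S] add_divide_distrib)
      moreover have "w1 (t *\<^sub>R x) = t * w1 x" for t x unfolding w1_def by (simp add: usc st_scaleR[OF S] algebra_simps)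
      moreover have "\<bar>w1 x\<bar> \<le> norm x" for x
        using uabs[of x] uabs[of "st x"] unfolding w1_def st_norm[OF S] by simp
      moreover have "w1 (st x) = w1 x" for x unfolding w1_def by (simp add: st_st[OF S])
      ultimately have a: "\<And>x y. w1 (x+y) = w1 x + w1 y" and b: "\<And>t x. w1 (t *\<^sub>R x) = t * w1 x"
        and c: "\<And>x. \<bar>w1 x\<bar> \<le> norm x" and d: "\<And>x. w1 (st x) = w1 x" by blast+
      show ?thesis
        apply (rule that)
          apply (rule complexify(1)[OF S a b c d])
         apply (rule complexify(2)[OF S a b c d])
        apply (rule complexify(3)[OF S a b c d])
        done
    qed
    obtain h2 where h2: "h2 \<in> herm_dual sm st" "\<And>x. cmod (h2 x) \<le> norm x" "\<And>x. Re (h2 x) = w2 x"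
    proof -
      have "w2 (x+y) = w2 x + w2 y" for x y unfolding w2_def by (simp add: uadd st_add[OF S] sm_addR[OF CN] diff_divide_distrib add_divide_distrib)
      moreover have "w2 (t *\<^sub>R x) = t * w2 x" for t x unfolding w2_def
        by (simp add: usc st_scaleR[OF S] sm_i_scaleR[OF CN] algebra_simps)
      moreover have "\<bar>w2 x\<bar> \<le> norm x" for x
      proof -
        have n1: "\<bar>u (sm \<i> x)\<bar> \<le> norm x" using uabs[of "sm \<i> x"] sm_norm[OF CN, of \<i> x] by simp
        have n2: "\<bar>u (st (sm \<i> x))\<bar> \<le> norm x" using uabs[of "st (sm \<i> x)"] st_norm[OF S, of "sm \<i> x"] sm_norm[OF CN, of \<i> x] by simp
        show ?thesis unfolding w2_def using n1 n2 by (auto simp: abs_le_iff)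
      qed
      moreover have "w2 (st x) = w2 x" for x
      proof -
        have "w2 (st x) = (u (- st (sm \<i> x)) - u (- sm \<i> x)) / 2" unfolding w2_def by (simp only: i2, simp only: i1)
        then show ?thesis unfolding uneg w2_def by simp
      qed
      ultimately have a: "\<And>x y. w2 (x+y) = w2 x + w2 y" and b: "\<And>t x. w2 (t *\<^sub>R x) = t * w2 x"
        and c: "\<And>x. \<bar>w2 x\<bar> \<le> norm x" and d: "\<And>x. w2 (st x) = w2 x" by blast+
      show ?thesis
        apply (rule that)
          apply (rule complexify(1)[OF S a b c d])
         apply (rule complexify(2)[OF S a b c d])
        apply (rule complexify(3)[OF S a b c d])
        done
    qed
    have vv: "sm \<i> (sm (- \<i>) v) = v" using sm_mult[OF CN, of \<i> "-\<i>" v] sm_one[OF CN] by simp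
    have "norm v = w1 v + w2 (sm (- \<i>) v)" unfolding w1_def w2_def vv uv[symmetric] by (simp add: field_simps)
    also have "\<dots> = Re (h1 v) + Re (h2 (sm (- \<i>) v))" using h1(3) h2(3) by simp
    also have "\<dots> \<le> cmod (h1 v) + cmod (h2 (sm (- \<i>) v))" by (intro add_mono complex_Re_le_cmod)
    also have "cmod (h2 (sm (- \<i>) v)) = cmod (h2 v)"
    proof -
      have "h2 (sm (- \<i>) v) = - \<i> * h2 v" using h2(1) unfolding herm_dual_def bounded_functional_def by blast
      then show ?thesis by (simp add: norm_mult)
    qed
    also have "cmod (h1 v) + cmod (h2 v) \<le> (1 + 2 * norm e) + (1 + 2 * norm e)"
      by (intro add_mono key_h[OF S ee p0 _ _ v] h1 h2)
    finally show ?thesis unfolding K_def by simp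
  qed
  show ?thesis
  proof (rule exI[of _ "1/K"], rule exI[of _ "2::real"], intro conjI subsetI)
    show "1/K > 0" using K0 by simp
    show "0 < (2::real)" by simp
  next
    fix x assume "x \<in> (\<lambda>v. (1/K) *\<^sub>R v) ` polar (herm_dual_e sm st e \<inter> dual_ball sm 2)"
    then obtain v where v: "v \<in> polar (herm_dual_e sm st e \<inter> dual_ball sm 2)" and x: "x = (1/K) *\<^sub>R v" by blast
    have "norm x = norm v / K" using x K0 by simp
    also have "\<dots> \<le> 1" using bound[OF v] K0 by simp
    finally show "x \<in> cball 0 1" by simp
  next
    fix v :: 'a assume "v \<in> cball 0 1"
    then have nv: "norm v \<le> 1" by simp
    have "(1/2) *\<^sub>R v \<in> polar (herm_dual_e sm st e \<inter> dual_ball sm 2)"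
      unfolding polar_def
    proof (intro CollectI ballI)
      fix f assume "f \<in> herm_dual_e sm st e \<inter> dual_ball sm 2"
      then have "cmod (f ((1/2) *\<^sub>R v)) \<le> 2 * norm ((1/2) *\<^sub>R v)"
        using dual_ball_bound[OF CN] by blast
      then show "cmod (f ((1/2) *\<^sub>R v)) \<le> 1" using nv by simp
    qed
    moreover have "v = 2 *\<^sub>R ((1/2) *\<^sub>R v)" by simp
    ultimately show "v \<in> (\<lambda>v. 2 *\<^sub>R v) ` polar (herm_dual_e sm st e \<inter> dual_ball sm 2)" by blast
  qed
qed


end
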